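(* For every integer $n\ge2$, $K(n)\ge n-1$.
   Context: Electricity division instance: supply $S>0$ and demands $D=(D[1],\dots,D[n])$ with $0<D[i]\le S$. A schedule partitions the time interval into finitely many subintervals, each assigned a set of households whose total demand is at most $S$; the egalitarian connection-time is the maximum, over schedules, of the minimum over households of the fraction of time the household is connected. For an integer $k\ge1$, a $k$-times bin packing of $D$ assigns $k$ copies of each household (item of size $D[i]$) to bins so that each bin has total size at most $S$ and no bin contains two copies of the same item; $OPT(D_k)$ is the minimum number of bins. $K(D)$ is the smallest positive integer $k$ such that the egalitarian connection-time of the instance equals $k/OPT(D_k)$, and $K(n)$ is the maximum of $K(D)$ over all instances with $n$ households. *)

theory Defs
  imports Complex_Main
begin

text \<open>Households are indexed by 0..n-1, demands D i, supply S.\<close>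

definition valid_instance :: "nat \<Rightarrow> real \<Rightarrow> (nat \<Rightarrow> real) \<Rightarrow> bool" where
  "valid_instance n S D \<longleftrightarrow> S > 0 \<and> (\<forall>i<n. 0 < D i \<and> D i \<le> S)"

definition feasible_set :: "nat \<Rightarrow> real \<Rightarrow> (nat \<Rightarrow> real) \<Rightarrow> nat set \<Rightarrow> bool" where
  "feasible_set n S D A \<longleftrightarrow> A \<subseteq> {..<n} \<and> (\<Sum>i\<in>A. D i) \<le> S"

text \<open>A schedule: finitely many subintervals of the (normalised) time interval [0,1],
  given as (length, connected set) pairs with positive lengths summing to 1.\<close>
definition is_schedule :: "nat \<Rightarrow> real \<Rightarrow> (nat \<Rightarrow> real) \<Rightarrow> (real \<times> nat set) list \<Rightarrow> bool" where
  "is_schedule n S D sch \<longleftrightarrow>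
     (\<forall>(t, A) \<in> set sch. t > 0 \<and> feasible_set n S D A) \<and> sum_list (map fst sch) = 1"

definition conn_time :: "(real \<times> nat set) list \<Rightarrow> nat \<Rightarrow> real" where
  "conn_time sch i = sum_list (map (\<lambda>(t, A). if i \<in> A then t else 0) sch)"

definition egal_time :: "nat \<Rightarrow> real \<Rightarrow> (nat \<Rightarrow> real) \<Rightarrow> real" where
  "egal_time n S D = Sup {(MIN i\<in>{..<n}. conn_time sch i) | sch. is_schedule n S D sch}"

text \<open>A k-times bin packing with m bins: bin b (b < m) holds a set of items (so no two
  copies of the same item share a bin), each bin fits, and each item lies in exactly k bins.\<close>
definition is_k_packing :: "nat \<Rightarrow> real \<Rightarrow> (nat \<Rightarrow> real) \<Rightarrow> nat \<Rightarrow> nat \<Rightarrow> (nat \<Rightarrow> nat set) \<Rightarrow> bool" where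
  "is_k_packing n S D k m bins \<longleftrightarrow>
     (\<forall>b<m. feasible_set n S D (bins b)) \<and> (\<forall>i<n. card {b. b < m \<and> i \<in> bins b} = k)"

definition OPT_k :: "nat \<Rightarrow> real \<Rightarrow> (nat \<Rightarrow> real) \<Rightarrow> nat \<Rightarrow> nat" where
  "OPT_k n S D k = (LEAST m. \<exists>bins. is_k_packing n S D k m bins)"

definition K_good :: "nat \<Rightarrow> real \<Rightarrow> (nat \<Rightarrow> real) \<Rightarrow> nat \<Rightarrow> bool" where
  "K_good n S D k \<longleftrightarrow> k \<ge> 1 \<and> egal_time n S D = real k / real (OPT_k n S D k)"

definition K_inst :: "nat \<Rightarrow> real \<Rightarrow> (nat \<Rightarrow> real) \<Rightarrow> nat" where
  "K_inst n S D = (LEAST k. K_good n S D k)"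

end

theory Submission
  imports Defs
begin

lemma feas_iff:
  "feasible_set n (real n - 1) (\<lambda>_. 1) A \<longleftrightarrow> A \<subseteq> {..<n} \<and> real (card A) \<le> real n - 1"
  by (simp add: feasible_set_def)

lemma sum_conn_le:
  assumes "\<forall>(t, A) \<in> set sch. t > 0 \<and> feasible_set n (real n - 1) (\<lambda>_. 1) A"
  shows "(\<Sum>i<n. conn_time sch i) \<le> (real n - 1) * sum_list (map fst sch)"
  using assms
proof (induction sch)
  case Nil
  then show ?case by (simp add: conn_time_def)
next
  case (Cons p sch)
  obtain t A where p: "p = (t, A)" by (cases p)
  have tA: "t > 0" "A \<subseteq> {..<n}" "real (card A) \<le> real n - 1"
    using Cons.prems p by (auto simp: feas_iff)
  have ct: "conn_time (p # sch) i = (if i \<in> A then t else 0) + conn_time sch i" for i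
    by (simp add: conn_time_def p)
  have "(\<Sum>i<n. (if i \<in> A then t else 0)) = (\<Sum>i\<in>{..<n} \<inter> A. t)"
    by (rule sum.inter_restrict[symmetric]) simp
  also have "{..<n} \<inter> A = A" using tA by auto
  finally have s1: "(\<Sum>i<n. (if i \<in> A then t else 0)) = t * real (card A)"
    by simp
  have "t * real (card A) \<le> t * (real n - 1)" using tA by (intro mult_left_mono) auto
  moreover have IH: "(\<Sum>i<n. conn_time sch i) \<le> (real n - 1) * sum_list (map fst sch)"
    using Cons by auto
  moreover have "(\<Sum>i<n. conn_time (p # sch) i) = (\<Sum>i<n. (if i \<in> A then t else 0)) + (\<Sum>i<n. conn_time sch i)"
    unfolding ct by (rule sum.distrib)
  moreover have "sum_list (map fst (p # sch)) = t + sum_list (map fst sch)" by (simp add: p)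
  ultimately show ?case
    by (simp only: s1) (simp add: algebra_simps)
qed

lemma egal:
  assumes n: "n \<ge> 2"
  shows "egal_time n (real n - 1) (\<lambda>_. 1) = (real n - 1) / real n"
proof -
  define sch where "sch = map (\<lambda>j. (1 / real n, {..<n} - {j})) [0..<n]"
  have np: "real n > 0" using n by simp
  have ct: "conn_time sch i = (real n - 1) / real n" if "i < n" for i
  proof -
    have "conn_time sch i = (\<Sum>j\<in>{0..<n}. (if i \<in> {..<n} - {j} then 1 / real n else 0))"
      unfolding conn_time_def sch_def
      by (simp add: o_def sum_set_upt_conv_sum_list_nat[symmetric] del: sum_set_upt_conv_sum_list_nat)
    also have "\<dots> = (\<Sum>j\<in>{j\<in>{0..<n}. j \<noteq> i}. 1 / real n)"
      using that by (subst sum.inter_filter) (auto intro!: sum.cong)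
    also have "{j\<in>{0..<n}. j \<noteq> i} = {0..<n} - {i}" by auto
    also have "(\<Sum>j\<in>{0..<n} - {i}. 1 / real n) = real (card ({0..<n} - {i})) / real n" by simp
    also have "card ({0..<n} - {i}) = n - 1" using that by simp
    finally show ?thesis using n by (simp add: of_nat_diff)
  qed
  have fs: "sum_list (map fst sch) = 1"
    unfolding sch_def using np
    by (simp add: o_def sum_list_triv)
  have issch: "is_schedule n (real n - 1) (\<lambda>_. 1) sch"
    unfolding is_schedule_def using fs np n
    by (auto simp: sch_def feas_iff of_nat_diff)
  have minv: "(MIN i\<in>{..<n}. conn_time sch i) = (real n - 1) / real n"
  proof -
    have "(\<lambda>i. conn_time sch i) ` {..<n} = {(real n - 1) / real n}"
    proof (intro equalityI subsetI)
      fix x assume "x \<in> (\<lambda>i. conn_time sch i) ` {..<n}"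
      then show "x \<in> {(real n - 1) / real n}" using ct by auto
    next
      fix x assume "x \<in> {(real n - 1) / real n}"
      then have "x = conn_time sch 0" using ct n by simp
      then show "x \<in> (\<lambda>i. conn_time sch i) ` {..<n}" using n by simp
    qed
    then show ?thesis by simp
  qed
  have ub: "(MIN i\<in>{..<n}. conn_time sc i) \<le> (real n - 1) / real n"
    if "is_schedule n (real n - 1) (\<lambda>_. 1) sc" for sc
  proof -
    have "0 \<in> {..<n}" using n by simp
    then have ne: "{..<n} \<noteq> {}" by blast
    have "(\<Sum>i<n. (MIN i\<in>{..<n}. conn_time sc i)) \<le> (\<Sum>i<n. conn_time sc i)"
      by (intro sum_mono) (simp add: ne)
    also have "\<dots> \<le> (real n - 1) * sum_list (map fst sc)"
      using that unfolding is_schedule_def by (intro sum_conn_le) auto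
    also have "\<dots> = real n - 1" using that unfolding is_schedule_def by simp
    finally have "real n * (MIN i\<in>{..<n}. conn_time sc i) \<le> real n - 1" by simp
    then show ?thesis using np by (simp add: field_simps)
  qed
  show ?thesis
    unfolding egal_time_def
    apply (rule cSup_eq_maximum)
     apply (rule CollectI, rule exI[of _ sch])
    using issch minv ub by auto
qed

lemma opt:
  assumes n: "n \<ge> 2"
  shows "OPT_k n (real n - 1) (\<lambda>_. 1) (n - 1) = n"
  unfolding OPT_k_def
proof (rule Least_equality)
  show "\<exists>bins. is_k_packing n (real n - 1) (\<lambda>_. 1) (n - 1) n bins"
  proof (intro exI)
    have "{b. b < n \<and> i \<in> {..<n} - {b}} = {..<n} - {i}" if "i < n" for i
      using that by auto
    then show "is_k_packing n (real n - 1) (\<lambda>_. 1) (n - 1) n (\<lambda>b. {..<n} - {b})"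
      unfolding is_k_packing_def using n by (auto simp: feas_iff of_nat_diff)
  qed
next
  fix m assume "\<exists>bins. is_k_packing n (real n - 1) (\<lambda>_. 1) (n - 1) m bins"
  then obtain bins where b: "is_k_packing n (real n - 1) (\<lambda>_. 1) (n - 1) m bins" by blast
  have cb: "card (bins j) \<le> n - 1" "bins j \<subseteq> {..<n}" if "j < m" for j
    using b that n unfolding is_k_packing_def feas_iff by auto
  have "n * (n - 1) = (\<Sum>i<n. card {j. j < m \<and> i \<in> bins j})"
    using b unfolding is_k_packing_def by simp
  also have "\<dots> = (\<Sum>i<n. \<Sum>j<m. (if i \<in> bins j then 1 else 0))"
  proof (intro sum.cong refl)
    fix i
    have "{j. j < m \<and> i \<in> bins j} = {j\<in>{..<m}. i \<in> bins j}" by auto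
    then show "card {j. j < m \<and> i \<in> bins j} = (\<Sum>j<m. (if i \<in> bins j then 1 else 0))"
      by (simp add: sum.inter_filter[symmetric])
  qed
  also have "\<dots> = (\<Sum>j<m. \<Sum>i<n. (if i \<in> bins j then 1 else 0))"
    by (rule sum.swap)
  also have "\<dots> = (\<Sum>j<m. card (bins j))"
  proof (intro sum.cong refl)
    fix j assume "j \<in> {..<m}"
    then have "{i\<in>{..<n}. i \<in> bins j} = bins j" using cb by auto
    moreover have "(\<Sum>i<n. (if i \<in> bins j then 1 else 0)) = (\<Sum>i\<in>{i\<in>{..<n}. i \<in> bins j}. (1::nat))"
      by (rule sum.inter_filter[symmetric]) simp
    ultimately show "(\<Sum>i<n. (if i \<in> bins j then 1 else 0)) = card (bins j)"
      by simp
  qed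
  also have "\<dots> \<le> (\<Sum>j<m. n - 1)" using cb by (intro sum_mono) auto
  also have "\<dots> = m * (n - 1)" by simp
  finally have "n * (n - 1) \<le> m * (n - 1)" .
  then show "n \<le> m" using n by simp
qed

theorem proposition1:
  fixes n :: nat
  assumes "n \<ge> 2"
  shows "\<exists>S D. valid_instance n S D \<and> (\<exists>k. K_good n S D k) \<and> n - 1 \<le> K_inst n S D"
proof -
  have n: "n \<ge> 2" by fact
  let ?S = "real n - 1" and ?D = "(\<lambda>_::nat. 1::real)"
  have v: "valid_instance n ?S ?D" unfolding valid_instance_def using n by auto
  have good: "K_good n ?S ?D (n - 1)"
  proof -
    have "real (n - 1) = real n - 1" using n by (simp add: of_nat_diff)
    then show ?thesis unfolding K_good_def using n by (simp only: egal opt) simp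
  qed

  have gen: "n - 1 \<le> k" if "K_good n ?S ?D k" for k
  proof -
    define o' where "o' = OPT_k n ?S ?D k"
    have k1: "k \<ge> 1" and eq: "real k / real o' = (real n - 1) / real n"
      using that n unfolding K_good_def o'_def by (auto simp: egal)
    have "o' \<noteq> 0"
    proof
      assume "o' = 0"
      then have "(real n - 1) / real n = 0" using eq by simp
      then show False using n by (simp add: field_simps)
    qed
    then have "real k * real n = (real n - 1) * real o'" using eq n
      by (simp add: field_simps)
    then have "real (k * n) = real ((n - 1) * o')" using n by (simp add: of_nat_diff)
    then have "k * n = (n - 1) * o'" by (simp only: of_nat_eq_iff)
    then have "(n - 1) dvd k * n" by (metis dvd_triv_left)
    moreover have "coprime (n - 1) n"
      proof -
      have "n = Suc (n - 1)" using n by simp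
      then show ?thesis by (metis coprime_Suc_right_nat)
    qed
    ultimately have "(n - 1) dvd k" using coprime_dvd_mult_left_iff by blast
    then show ?thesis using k1 by (simp add: dvd_imp_le)
  qed
  have "n - 1 \<le> K_inst n ?S ?D"
    unfolding K_inst_def using good by (intro gen LeastI)
  then show ?thesis using v good by blast
qed

end
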